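(* Assume $S\times M\neq\emptyset$, let $(x,\lambda):[t_0,+\infty[\ \to X\times Y$ be a solution of (AHT), for each $t\ge t_0$ let $(x_t,\lambda_t)$ be the unique zero of $T_t=T+\varepsilon(t)\mathrm{id}$, and suppose $\varepsilon$ is decreasing and there exists $t_+\ge t_0$ such that $\varepsilon^2(t)+\dot\varepsilon(t)\ge0$ and $2\varepsilon(t)\dot\varepsilon(t)+\ddot\varepsilon(t)\le0$ for all $t\ge t_+$. Then \[ \limsup_{t\to+\infty}e^{-\rho(t)}\int_{t_+}^t e^{\rho(\tau)}\frac{1}{\varepsilon(\tau)}\|(\dot x(\tau),\dot\lambda(\tau))+\varepsilon(\tau)((x(\tau),\lambda(\tau))-(x_\tau,\lambda_\tau))\|^2\,d\tau<+\infty, \] \[ \limsup_{t\to+\infty}e^{-\rho(t)}\int_{t_+}^t e^{\rho(\tau)}\frac{1}{\varepsilon(\tau)}\|T(x(\tau),\lambda(\tau))-T(x_\tau,\lambda_\tau)\|^2\,d\tau<+\infty. \]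
   Context: $X,Y$ are real Hilbert spaces; $X\times Y$ carries the product inner product and norm $\|\cdot\|$. Standing assumptions: $f:X\to\mathbb{R}$ is convex and continuously differentiable with $\nabla f$ Lipschitz continuous on bounded subsets of $X$; $A:X\to Y$ is linear and continuous with adjoint $A^*$; $b\in Y$; $\varepsilon:[t_0,+\infty[\ \to\ ]0,+\infty[$ ($t_0\ge0$) is twice continuously differentiable with $\lim_{t\to+\infty}\varepsilon(t)=0$. $L(x,\lambda)=f(x)+\langle\lambda,Ax-b\rangle_Y$ and $T(x,\lambda)=(\nabla f(x)+A^*\lambda,\ b-Ax)$. $S$ is the set of optimal solutions of $\min\{f(x):Ax=b\}$, $M$ the set of Lagrange multipliers; $S\times M$ is the set of saddle points of $L$, equal to the zero set of $T$. $T_t=T+\varepsilon(t)\mathrm{id}$ has a unique zero $(x_t,\lambda_t)$. $\rho(t)=\int_{t_0}^t\varepsilon(\tau)\,d\tau$. (AHT) is the system $\dot x+\nabla f(x)+A^*\lambda+\varepsilon(t)x=0$, $\dot\lambda+b-Ax+\varepsilon(t)\lambda=0$; a solution is a continuously differentiable $(x,\lambda):[t_0,+\infty[\ \to X\times Y$ satisfying it on $[t_0,+\infty[$ (existence and uniqueness for every initial datum is assumed). *)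

theory Defs
  imports "HOL-Analysis.Analysis"
begin

definition opT :: "('a::real_inner \<Rightarrow> 'a) \<Rightarrow> ('b::real_inner \<Rightarrow> 'a) \<Rightarrow> ('a \<Rightarrow> 'b) \<Rightarrow> 'b
      \<Rightarrow> 'a \<times> 'b \<Rightarrow> 'a \<times> 'b" where
  "opT gf Astar A b = (\<lambda>(x, l). (gf x + Astar l, b - A x))"

definition lagr :: "('a \<Rightarrow> real) \<Rightarrow> ('a \<Rightarrow> 'b::real_inner) \<Rightarrow> 'b \<Rightarrow> 'a \<Rightarrow> 'b \<Rightarrow> real" where
  "lagr f A b x l = f x + inner l (A x - b)"

text \<open>Saddle points of L (this set equals S x M).\<close>
definition saddle_points :: "('a \<Rightarrow> real) \<Rightarrow> ('a \<Rightarrow> 'b::real_inner) \<Rightarrow> 'b \<Rightarrow> ('a \<times> 'b) set" where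
  "saddle_points f A b = {(x, l). \<forall>y m. lagr f A b x m \<le> lagr f A b x l \<and> lagr f A b x l \<le> lagr f A b y l}"

end

theory Submission
  imports Defs
begin

lemma at_within_local:
  fixes x t0 :: real
  assumes "t0 \<le> x"
  shows "at x within {t0..x+1} = at x within {t0..}"
  by (rule at_within_nhd[where S="{..<x+1}"]) (use assms in auto)

lemma shiftd:
  fixes g :: "real \<Rightarrow> 'c::real_normed_vector"
  assumes "\<And>x. x \<ge> t0 \<Longrightarrow> (g has_vector_derivative g' x) (at x within {t0..})"
    and "t0 \<le> a" "0 \<le> h" "x \<in> {a..b}"
  shows "((\<lambda>r. g (r+h)) has_vector_derivative g' (x+h)) (at x within {a..b})"
proof -
  have 1: "((\<lambda>r. r + h) has_vector_derivative 1) (at x within {a..b})"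
    by (auto intro!: derivative_eq_intros)
  have 2: "(g has_vector_derivative g' (x+h)) (at ((\<lambda>r. r+h) x) within (\<lambda>r. r+h) ` {a..b})"
    using assms(1)[of "x+h"] assms(2-4)
    by (auto intro: has_vector_derivative_within_subset)
  from vector_diff_chain_within[OF 1 2] show ?thesis by (simp add: o_def)
qed

lemma mono_dec:
  fixes f :: "real \<Rightarrow> real"
  assumes "a \<le> b" "\<And>x. x \<in> {a..b} \<Longrightarrow> (f has_real_derivative f' x) (at x within {a..b})"
    "\<And>x. a < x \<Longrightarrow> x < b \<Longrightarrow> f' x \<le> 0"
  shows "f b \<le> f a"
proof (rule DERIV_nonpos_imp_decreasing_open[OF assms(1)])
  show "continuous_on {a..b} f"
    using assms(2) DERIV_continuous continuous_on_eq_continuous_within by blast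
  fix x assume "a < x" "x < b"
  then show "\<exists>y. (f has_real_derivative y) (at x) \<and> y \<le> 0"
    using assms(2)[of x] assms(3)[of x] by (auto simp: at_within_Icc_at)
qed

lemma vd_inner:
  fixes f g :: "real \<Rightarrow> 'c::real_inner"
  assumes "(f has_vector_derivative f') (at x within S)" "(g has_vector_derivative g') (at x within S)"
  shows "((\<lambda>r. inner (f r) (g r)) has_real_derivative (inner (f x) g' + inner f' (g x))) (at x within S)"
proof -
  have "((\<lambda>r. inner (f r) (g r)) has_derivative (\<lambda>h. inner (f x) (h *\<^sub>R g') + inner (h *\<^sub>R f') (g x))) (at x within S)"
    using assms unfolding has_vector_derivative_def by (intro derivative_eq_intros) auto
  then show ?thesis unfolding has_field_derivative_def
    by (rule has_derivative_eq_rhs) (auto simp: algebra_simps)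
qed


lemma tangent_ineq:
  fixes f :: "'a::real_inner \<Rightarrow> real"
  assumes cvx: "convex_on UNIV f" and d: "\<And>x. (f has_derivative (\<lambda>h. inner (gf x) h)) (at x)"
  shows "f x + inner (gf x) (y - x) \<le> f y"
proof -
  define g where "g s = f (x + s *\<^sub>R (y - x))" for s :: real
  have cg: "convex_on UNIV g"
  proof (rule convex_onI)
    fix t a c :: real assume t: "0 < t" "t < 1"
    have "x + ((1 - t) *\<^sub>R a + t *\<^sub>R c) *\<^sub>R (y - x) = (1 - t) *\<^sub>R (x + a *\<^sub>R (y - x)) + t *\<^sub>R (x + c *\<^sub>R (y - x))"
      by (simp add: algebra_simps)
    then show "g ((1 - t) *\<^sub>R a + t *\<^sub>R c) \<le> (1 - t) * g a + t * g c"
      unfolding g_def using convex_onD[OF cvx, of t] t by auto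
  qed auto
  have "((\<lambda>s. x + s *\<^sub>R (y - x)) has_derivative (\<lambda>s. s *\<^sub>R (y - x))) (at 0)"
    by (auto intro!: derivative_eq_intros)
  from diff_chain_at[OF this, of f "\<lambda>h. inner (gf x) h"] d[of x]
  have "(g has_derivative (\<lambda>s. inner (gf x) (s *\<^sub>R (y - x)))) (at 0)"
    by (simp add: g_def[abs_def] o_def)
  then have "(g has_field_derivative inner (gf x) (y - x)) (at 0)"
    unfolding has_field_derivative_def
    by (rule has_derivative_eq_rhs) (auto simp: algebra_simps)
  from convex_on_imp_above_tangent[OF cg, of 0 1] this
  have "g 1 - g 0 \<ge> inner (gf x) (y - x) * (1 - 0)" by auto
  then show ?thesis by (simp add: g_def)
qed

lemma grad_mono:
  fixes f :: "'a::real_inner \<Rightarrow> real"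
  assumes cvx: "convex_on UNIV f" and d: "\<And>x. (f has_derivative (\<lambda>h. inner (gf x) h)) (at x)"
  shows "inner (gf x - gf y) (x - y) \<ge> 0"
proof -
  have "f x + inner (gf x) (y - x) \<le> f y" "f y + inner (gf y) (x - y) \<le> f x"
    using tangent_ineq[OF cvx d] by blast+
  then show ?thesis by (simp add: inner_diff_left inner_diff_right inner_commute)
qed

lemma opT_mono:
  fixes f :: "'a::real_inner \<Rightarrow> real" and A :: "'a \<Rightarrow> 'b::real_inner"
  assumes cvx: "convex_on UNIV f" and d: "\<And>x. (f has_derivative (\<lambda>h. inner (gf x) h)) (at x)"
    and A_lin: "bounded_linear A" and A_adj: "\<And>x y. inner (A x) y = inner x (Astar y)"
  shows "inner (opT gf Astar A b p - opT gf Astar A b q) (p - q) \<ge> 0"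
proof -
  obtain x l where p: "p = (x, l)" by (cases p)
  obtain x' l' where q: "q = (x', l')" by (cases q)
  have lin: "A x - A x' = A (x - x')"
    using A_lin by (simp add: linear_diff bounded_linear.linear)
  have "inner (Astar l - Astar l') (x - x') = inner (A (x - x')) (l - l')"
    by (simp add: inner_diff_left inner_diff_right A_adj[symmetric] lin[symmetric] inner_commute)
  then have "inner (opT gf Astar A b p - opT gf Astar A b q) (p - q) = inner (gf x - gf x') (x - x')"
    unfolding p q opT_def using lin
    by (simp add: inner_Pair inner_diff_left inner_diff_right algebra_simps inner_commute)
  then show ?thesis using grad_mono[OF cvx d] by simp
qed

lemma saddle_zero:
  fixes f :: "'a::real_inner \<Rightarrow> real" and A :: "'a \<Rightarrow> 'b::real_inner"
  assumes d: "\<And>x. (f has_derivative (\<lambda>h. inner (gf x) h)) (at x)"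
    and A_lin: "bounded_linear A" and A_adj: "\<And>x y. inner (A x) y = inner x (Astar y)"
    and sp: "saddle_points f A b \<noteq> {}"
  shows "\<exists>q. opT gf Astar A b q = 0"
proof -
  obtain x l where xl: "(x, l) \<in> saddle_points f A b" using sp by auto
  then have H: "\<And>y m. lagr f A b x m \<le> lagr f A b x l \<and> lagr f A b x l \<le> lagr f A b y l"
    unfolding saddle_points_def by auto
  have "lagr f A b x (l + (A x - b)) \<le> lagr f A b x l" using H by blast
  then have "inner (A x - b) (A x - b) \<le> 0" by (simp add: lagr_def inner_add_left)
  then have "inner (A x - b) (A x - b) = 0" by (meson antisym inner_ge_zero)
  then have Ax: "A x - b = 0" by simp
  define phi where "phi y = f y + inner l (A y - b)" for y
  have "(phi has_derivative (\<lambda>h. inner (gf x) h + inner l (A h))) (at x)"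
    unfolding phi_def using d[of x] A_lin
    by (auto intro!: derivative_eq_intros bounded_linear.has_derivative[OF A_lin])
  moreover have "\<forall>y\<in>UNIV. phi x \<le> phi y" using H by (auto simp: phi_def lagr_def)
  ultimately have "(\<lambda>h. inner (gf x) h + inner l (A h)) = (\<lambda>v. 0)"
    using differential_zero_maxmin[of x UNIV phi] by auto
  then have "inner (gf x) (gf x + Astar l) + inner l (A (gf x + Astar l)) = 0" by metis
  then have "inner (gf x + Astar l) (gf x + Astar l) = 0"
    by (metis A_adj inner_add_left inner_commute)
  then have "gf x + Astar l = 0" by simp
  then show ?thesis using Ax by (intro exI[of _ "(x,l)"]) (simp add: opT_def zero_prod_def)
qed


context
  fixes T :: "'c::real_inner \<Rightarrow> 'c" and z z' :: "real \<Rightarrow> 'c"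
    and eps eps' eps'' :: "real \<Rightarrow> real" and t0 tp :: real and q0 :: 'c
  assumes mono: "\<And>p q. inner (T p - T q) (p - q) \<ge> 0"
    and q0: "T q0 = 0"
    and eps_pos: "\<And>t. t \<ge> t0 \<Longrightarrow> eps t > 0"
    and eps_d1: "\<And>t. t \<ge> t0 \<Longrightarrow> (eps has_real_derivative eps' t) (at t within {t0..})"
    and eps_d2: "\<And>t. t \<ge> t0 \<Longrightarrow> (eps' has_real_derivative eps'' t) (at t within {t0..})"
    and z_deriv: "\<And>t. t \<ge> t0 \<Longrightarrow> (z has_vector_derivative z' t) (at t within {t0..})"
    and z'_cont: "continuous_on {t0..} z'"
    and AHT: "\<And>t. t \<ge> t0 \<Longrightarrow> z' t + T (z t) + eps t *\<^sub>R z t = 0"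
    and eps_decr: "\<And>s t. t0 \<le> s \<Longrightarrow> s \<le> t \<Longrightarrow> eps t \<le> eps s"
    and tp_ge: "tp \<ge> t0"
    and cond1: "\<And>t. t \<ge> tp \<Longrightarrow> (eps t)\<^sup>2 + eps' t \<ge> 0"
    and cond2: "\<And>t. t \<ge> tp \<Longrightarrow> 2 * eps t * eps' t + eps'' t \<le> 0"
begin

lemma cont_from_deriv:
  fixes g :: "real \<Rightarrow> 'd::real_normed_vector"
  assumes "\<And>x. x \<ge> t0 \<Longrightarrow> (g has_vector_derivative g' x) (at x within {t0..})"
  shows "continuous_on {t0..} g"
  using assms has_vector_derivative_continuous continuous_on_eq_continuous_within by fastforce

lemma int_deriv:
  fixes g :: "real \<Rightarrow> real"
  assumes "continuous_on {t0..} g" "x \<ge> t0"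
  shows "((\<lambda>t. integral {t0..t} g) has_vector_derivative g x) (at x within {t0..})"
proof -
  have "continuous_on {t0..x+1} g" using assms(1) by (rule continuous_on_subset) auto
  from integral_has_vector_derivative[OF this, of x] assms(2)
  show ?thesis by (simp add: at_within_local[OF assms(2)])
qed

lemma eps_vd: "t \<ge> t0 \<Longrightarrow> (eps has_vector_derivative eps' t) (at t within {t0..})"
  using eps_d1 by (simp add: has_real_derivative_iff_has_vector_derivative)
lemma eps'_vd: "t \<ge> t0 \<Longrightarrow> (eps' has_vector_derivative eps'' t) (at t within {t0..})"
  using eps_d2 by (simp add: has_real_derivative_iff_has_vector_derivative)

lemma eps_cont: "continuous_on {t0..} eps"
  using cont_from_deriv eps_vd by blast

definition "rho t = integral {t0..t} eps"
definition "NN t = inner (z t) (z t)"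
definition "rhoN t = integral {t0..t} NN"

lemma NN_vd: "t \<ge> t0 \<Longrightarrow> (NN has_vector_derivative (2 * inner (z t) (z' t))) (at t within {t0..})"
  using vd_inner[OF z_deriv z_deriv, of t] unfolding NN_def[abs_def]
  by (simp add: has_real_derivative_iff_has_vector_derivative[symmetric] inner_commute)

lemma NN_cont: "continuous_on {t0..} NN"
  by (rule cont_from_deriv[OF NN_vd])

lemma rho_vd: "t \<ge> t0 \<Longrightarrow> (rho has_vector_derivative eps t) (at t within {t0..})"
  unfolding rho_def[abs_def] using int_deriv[OF eps_cont] by blast

lemma rhoN_vd: "t \<ge> t0 \<Longrightarrow> (rhoN has_vector_derivative NN t) (at t within {t0..})"
  unfolding rhoN_def[abs_def] using int_deriv[OF NN_cont] by blast

lemma rd: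
  assumes "\<And>x. x \<ge> t0 \<Longrightarrow> (g has_vector_derivative g' x) (at x within {t0..})"
    and "t0 \<le> a" "0 \<le> h" "x \<in> {a..b}"
  shows "((\<lambda>r. g (r+h)) has_real_derivative g' (x+h)) (at x within {a..b})"
  using shiftd[OF assms] by (simp add: has_real_derivative_iff_has_vector_derivative)

lemma rd0:
  assumes "\<And>x. x \<ge> t0 \<Longrightarrow> (g has_vector_derivative g' x) (at x within {t0..})"
    and "t0 \<le> a" "x \<in> {a..b}"
  shows "(g has_real_derivative g' x) (at x within {a..b})"
  using rd[OF assms(1,2) order_refl assms(3)] by simp

lemma rho_t0: "rho t0 = 0" by (simp add: rho_def)

lemma rho_mono: assumes "t0 \<le> s" "s \<le> t" shows "rho s \<le> rho t"
proof -
  have "(\<lambda>r. - rho r) t \<le> (\<lambda>r. - rho r) s"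
  proof (rule mono_dec[OF assms(2), where f'="\<lambda>r. - eps r"])
    fix x assume "x \<in> {s..t}"
    then show "((\<lambda>r. - rho r) has_real_derivative - eps x) (at x within {s..t})"
      using assms by (auto intro!: derivative_eq_intros rd0[OF rho_vd])
  next
    fix x assume "s < x" "x < t"
    then show "- eps x \<le> 0" using assms eps_pos[of x] by simp
  qed
  then show ?thesis by simp
qed

lemma rho_nonneg: "t \<ge> t0 \<Longrightarrow> rho t \<ge> 0"
  using rho_mono[of t0 t] rho_t0 by simp

lemma z_bounded: "\<exists>B. \<forall>t\<ge>t0. NN t \<le> B"
proof -
  define c2 where "c2 = inner q0 q0"
  define ph where "ph t = inner (z t - q0) (z t - q0)" for t
  have key: "ph t \<le> max (ph t0) c2" if t: "t \<ge> t0" for t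
  proof -
    define Ph where "Ph r = exp (rho r) * (ph r - c2)" for r
    have "Ph t \<le> Ph t0"
    proof (rule mono_dec[OF t, where f'="\<lambda>r. exp (rho r) * eps r * (ph r - c2) + exp (rho r) * (2 * inner (z r - q0) (z' r))"])
      fix x assume x: "x \<in> {t0..t}"
      have zd: "((\<lambda>r. z r - q0) has_vector_derivative z' x) (at x within {t0..t})"
        using z_deriv[of x] x by (auto intro!: derivative_eq_intros intro: has_vector_derivative_within_subset)
      have "(ph has_real_derivative (2 * inner (z x - q0) (z' x))) (at x within {t0..t})"
        using vd_inner[OF zd zd] unfolding ph_def[abs_def] by (simp add: inner_commute)
      then show "(Ph has_real_derivative exp (rho x) * eps x * (ph x - c2) + exp (rho x) * (2 * inner (z x - q0) (z' x))) (at x within {t0..t})"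
        unfolding Ph_def[abs_def] using x
        by (auto intro!: derivative_eq_intros rd0[OF rho_vd] simp: algebra_simps)
    next
      fix x assume x: "t0 < x" "x < t"
      let ?p = "z x - q0"
      have zx: "z' x = - T (z x) - eps x *\<^sub>R z x" using AHT[of x] x by (simp add: algebra_simps eq_neg_iff_add_eq_0)
      have m: "inner (T (z x) - T q0) ?p \<ge> 0" using mono by blast
      have "inner ?p (z' x) = - inner (T (z x) - T q0) ?p - eps x * inner ?p (z x)"
        by (simp add: zx q0 inner_diff_left inner_diff_right inner_commute algebra_simps)
      also have "inner ?p (z x) = inner ?p ?p + inner ?p q0" by (simp add: inner_diff_right inner_diff_left)
      finally have e: "inner ?p (z' x) \<le> - eps x * (inner ?p ?p + inner ?p q0)" using m by simp
      have sq: "inner ?p ?p + 2 * inner ?p q0 + c2 \<ge> 0"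
      proof -
        have "inner (?p + q0) (?p + q0) = inner ?p ?p + 2 * inner ?p q0 + c2"
          unfolding c2_def inner_add_left inner_add_right by (simp only: inner_commute[of q0 ?p])
        then show ?thesis using inner_ge_zero[of "?p + q0"] by linarith
      qed
      have ep: "eps x > 0" using eps_pos x by simp
      have "eps x * (ph x - c2) + 2 * inner ?p (z' x) \<le> eps x * (ph x - c2) - 2 * eps x * (inner ?p ?p + inner ?p q0)"
        using e by simp
      also have "\<dots> = - eps x * (inner ?p ?p + 2 * inner ?p q0 + c2)" by (simp add: ph_def algebra_simps)
      also have "\<dots> \<le> 0" using ep sq by simp
      finally have "eps x * (ph x - c2) + 2 * inner ?p (z' x) \<le> 0" .
      then have "exp (rho x) * (eps x * (ph x - c2) + 2 * inner ?p (z' x)) \<le> 0"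
        by (simp add: mult_nonneg_nonpos)
      then show "exp (rho x) * eps x * (ph x - c2) + exp (rho x) * (2 * inner ?p (z' x)) \<le> 0"
        by (simp add: algebra_simps)
    qed
    then have "exp (rho t) * (ph t - c2) \<le> ph t0 - c2" by (simp add: Ph_def rho_t0)
    moreover have "exp (rho t) \<ge> 1" using rho_nonneg[OF t] by simp
    ultimately show ?thesis
    proof (cases "ph t - c2 \<le> 0")
      case False
      then have "1 * (ph t - c2) \<le> exp (rho t) * (ph t - c2)"
        using \<open>exp (rho t) \<ge> 1\<close> by (intro mult_right_mono) auto
      then show ?thesis using \<open>exp (rho t) * (ph t - c2) \<le> ph t0 - c2\<close> by simp
    qed simp
  qed
  have "NN t \<le> 2 * max (ph t0) c2 + 2 * c2" if t: "t \<ge> t0" for t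
  proof -
    have "NN t = inner ((z t - q0) + q0) ((z t - q0) + q0)" by (simp add: NN_def)
    also have "\<dots> \<le> 2 * ph t + 2 * c2"
    proof -
      have "inner ((z t - q0) - q0) ((z t - q0) - q0) \<ge> 0" by simp
      then show ?thesis
        by (simp add: ph_def c2_def inner_add_left inner_add_right inner_diff_left inner_diff_right inner_commute)
    qed
    finally show ?thesis using key[OF t] by simp
  qed
  then show ?thesis by blast
qed

lemma psi_dec: assumes "tp \<le> s" "s \<le> t" shows "(eps t)\<^sup>2 + eps' t \<le> (eps s)\<^sup>2 + eps' s"
proof (rule mono_dec[OF assms(2), where f'="\<lambda>r. 2 * eps r * eps' r + eps'' r"])
  fix x assume "x \<in> {s..t}"
  then show "((\<lambda>r. (eps r)\<^sup>2 + eps' r) has_real_derivative 2 * eps x * eps' x + eps'' x) (at x within {s..t})"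
    using assms tp_ge by (auto intro!: derivative_eq_intros rd0[OF eps_vd] rd0[OF eps'_vd])
next
  fix x assume "s < x" "x < t"
  then show "2 * eps x * eps' x + eps'' x \<le> 0" using cond2[of x] assms by simp
qed

lemma NN_nonneg: "NN t \<ge> 0" by (simp add: NN_def)

lemma rhoN_mono: assumes "t0 \<le> s" "s \<le> t" shows "rhoN s \<le> rhoN t"
proof -
  have "(\<lambda>r. - rhoN r) t \<le> (\<lambda>r. - rhoN r) s"
  proof (rule mono_dec[OF assms(2), where f'="\<lambda>r. - NN r"])
    fix x assume "x \<in> {s..t}"
    then show "((\<lambda>r. - rhoN r) has_real_derivative - NN x) (at x within {s..t})"
      using assms by (auto intro!: derivative_eq_intros rd0[OF rhoN_vd])
  qed (simp add: NN_nonneg)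
  then show ?thesis by simp
qed

lemma rhoN_lip: assumes "t0 \<le> s" "s \<le> t" "\<And>r. r \<in> {s..t} \<Longrightarrow> NN r \<le> B"
  shows "rhoN t - rhoN s \<le> B * (t - s)"
proof -
  have "(\<lambda>r. rhoN r - B * r) t \<le> (\<lambda>r. rhoN r - B * r) s"
  proof (rule mono_dec[OF assms(2), where f'="\<lambda>r. NN r - B"])
    fix x assume "x \<in> {s..t}"
    then show "((\<lambda>r. rhoN r - B * r) has_real_derivative NN x - B) (at x within {s..t})"
      using assms by (auto intro!: derivative_eq_intros rd0[OF rhoN_vd])
  qed (use assms in auto)
  then show ?thesis by (simp add: algebra_simps)
qed

lemma eps_diff: assumes "tp \<le> t" "0 \<le> h" shows "eps t - eps (t+h) \<le> h * (eps t)\<^sup>2"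
proof -
  have "(\<lambda>r. - eps r - (eps t)\<^sup>2 * r) (t+h) \<le> (\<lambda>r. - eps r - (eps t)\<^sup>2 * r) t"
  proof (rule mono_dec[where f="\<lambda>r. - eps r - (eps t)\<^sup>2 * r" and f'="\<lambda>r. - eps' r - (eps t)\<^sup>2"])
    show "t \<le> t + h" using assms by simp
    fix x assume "x \<in> {t..t+h}"
    then show "((\<lambda>r. - eps r - (eps t)\<^sup>2 * r) has_real_derivative - eps' x - (eps t)\<^sup>2) (at x within {t..t+h})"
      using assms tp_ge by (auto intro!: derivative_eq_intros rd0[OF eps_vd])
  next
    fix x assume x: "t < x" "x < t + h"
    have "eps x \<le> eps t" "eps x > 0" using eps_decr[of t x] eps_pos[of x] x assms tp_ge by auto
    then have "(eps x)\<^sup>2 \<le> (eps t)\<^sup>2" by (simp add: power_mono)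
    then show "- eps' x - (eps t)\<^sup>2 \<le> 0" using cond1[of x] x assms by simp
  qed
  then show ?thesis by (simp add: algebra_simps)
qed

definition "Fh h r = exp (rho r + rho (r+h)) * (inner (z (r+h) - z r) (z (r+h) - z r) / 2
   + (eps (r+h) - eps r) * (rhoN (r+h) - rhoN r) / 2)"

lemma ident:
  fixes x y :: 'c and a b :: real
  shows "inner (y - x) (b *\<^sub>R y - a *\<^sub>R x) = (a + b) / 2 * inner (y - x) (y - x) + (b - a) / 2 * (inner y y - inner x x)"
  by (simp add: inner_diff_left inner_diff_right inner_commute algebra_simps) (simp add: field_simps)

lemma arith1:
  fixes a b e0 e1 ND J Mv dN :: real
  assumes "Mv \<le> - ((a+b)/2*ND + (b-a)/2*dN)"
  shows "(a+b)*(ND/2 + (b-a)*J/2) + (Mv + ((e1-e0)*J + (b-a)*dN)/2) \<le> ((b\<^sup>2 + e1) - (a\<^sup>2 + e0))*J/2"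
proof -
  have "(a+b)*(ND/2 + (b-a)*J/2) + (Mv + ((e1-e0)*J + (b-a)*dN)/2) - ((b\<^sup>2 + e1) - (a\<^sup>2 + e0))*J/2
      = (a+b)/2*ND + Mv + (b-a)/2*dN" by (simp add: field_simps power2_eq_square)
  then show ?thesis using assms by linarith
qed

definition "Fhd h x = exp (rho x + rho (x+h)) * ((eps x + eps (x+h)) *
     (inner (z (x+h) - z x) (z (x+h) - z x) / 2 + (eps (x+h) - eps x) * (rhoN (x+h) - rhoN x) / 2)
   + (inner (z (x+h) - z x) (z' (x+h) - z' x) + ((eps' (x+h) - eps' x) * (rhoN (x+h) - rhoN x) + (eps (x+h) - eps x) * (NN (x+h) - NN x)) / 2))"

lemma Fh_dec: assumes h: "0 < h" and t: "tp \<le> t" shows "Fh h t \<le> Fh h tp"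
proof (rule mono_dec[OF t, where f'="Fhd h"])
  fix x assume x: "x \<in> {tp..t}"
  have hh: "0 \<le> h" using h by simp
  have Dd: "((\<lambda>r. z (r+h) - z r) has_vector_derivative z' (x+h) - z' x) (at x within {tp..t})"
    using shiftd[OF z_deriv tp_ge hh x] shiftd[OF z_deriv tp_ge order_refl x]
    by (auto intro!: derivative_eq_intros)
  have DD: "((\<lambda>r. inner (z (r+h) - z r) (z (r+h) - z r)) has_real_derivative
      2 * inner (z (x+h) - z x) (z' (x+h) - z' x)) (at x within {tp..t})"
    using vd_inner[OF Dd Dd] by (simp add: inner_commute)
  note r1 = rd0[OF rho_vd tp_ge x] rd[OF rho_vd tp_ge hh x]
  note r2 = rd0[OF eps_vd tp_ge x] rd[OF eps_vd tp_ge hh x]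
  note r3 = rd0[OF eps'_vd tp_ge x] rd[OF eps'_vd tp_ge hh x]
  note r4 = rd0[OF rhoN_vd tp_ge x] rd[OF rhoN_vd tp_ge hh x]
  show "(Fh h has_real_derivative Fhd h x) (at x within {tp..t})"
    unfolding Fh_def[abs_def] Fhd_def
    by (rule derivative_eq_intros r1 r2 r3 r4 DD refl | simp)+ (simp add: field_simps)
next
  fix x assume x: "tp < x" "x < t"
  have x0: "x \<ge> t0" "x + h \<ge> t0" using x tp_ge h by auto
  let ?a = "eps x" and ?b = "eps (x+h)" and ?X = "z x" and ?Y = "z (x+h)"
  have zx: "z' x = - T ?X - ?a *\<^sub>R ?X" using AHT[OF x0(1)] by (simp add: algebra_simps eq_neg_iff_add_eq_0)
  have zy: "z' (x+h) = - T ?Y - ?b *\<^sub>R ?Y" using AHT[OF x0(2)] by (simp add: algebra_simps eq_neg_iff_add_eq_0)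
  have "inner (?Y - ?X) (z' (x+h) - z' x) = - inner (T ?Y - T ?X) (?Y - ?X) - inner (?Y - ?X) (?b *\<^sub>R ?Y - ?a *\<^sub>R ?X)"
    unfolding zy zx by (simp add: inner_diff_left inner_diff_right inner_commute algebra_simps)
  also have "\<dots> \<le> - inner (?Y - ?X) (?b *\<^sub>R ?Y - ?a *\<^sub>R ?X)" using mono[of ?Y ?X] by simp
  finally have M: "inner (?Y - ?X) (z' (x+h) - z' x) \<le> - ((?a + ?b) / 2 * inner (?Y - ?X) (?Y - ?X) + (?b - ?a) / 2 * (NN (x+h) - NN x))"
    by (simp add: ident NN_def)
  have J: "rhoN (x+h) - rhoN x \<ge> 0" using rhoN_mono[of x "x+h"] x0 h by simp
  have P: "(eps (x+h))\<^sup>2 + eps' (x+h) \<le> (eps x)\<^sup>2 + eps' x" using psi_dec[of x "x+h"] x h by simp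
  let ?J = "rhoN (x+h) - rhoN x"
  have "(?a + ?b) * (inner (?Y - ?X) (?Y - ?X) / 2 + (?b - ?a) * ?J / 2)
     + (inner (?Y - ?X) (z' (x+h) - z' x) + ((eps' (x+h) - eps' x) * ?J + (?b - ?a) * (NN (x+h) - NN x)) / 2)
     \<le> (((eps (x+h))\<^sup>2 + eps' (x+h)) - ((eps x)\<^sup>2 + eps' x)) * ?J / 2"
    by (rule arith1[OF M])
  also have "\<dots> \<le> 0" using J P by (simp add: mult_nonpos_nonneg)
  finally show "Fhd h x \<le> 0" unfolding Fhd_def
    by (simp add: mult_nonneg_nonpos)
qed

lemma z_at: "x > t0 \<Longrightarrow> (z has_vector_derivative z' x) (at x)"
proof -
  assume x: "x > t0"
  have "(z has_vector_derivative z' x) (at x within {t0<..})"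
    using z_deriv[of x] x by (auto intro: has_vector_derivative_within_subset)
  then show ?thesis using at_within_open[of x "{t0<..}"] x by simp
qed

lemma D_small: obtains K where "K \<ge> 0" "\<And>h. 0 < h \<Longrightarrow> h \<le> 1 \<Longrightarrow> norm (z (tp+h) - z tp) \<le> K * h"
proof -
  have "compact (z' ` {tp..tp+1})"
    by (rule compact_continuous_image[OF continuous_on_subset[OF z'_cont]]) (use tp_ge in auto)
  then obtain K where K: "\<And>x. x \<in> {tp..tp+1} \<Longrightarrow> norm (z' x) \<le> K"
    using compact_imp_bounded bounded_iff by (metis image_eqI)
  have "norm (z' tp) \<le> K" using K by simp
  then have K0: "K \<ge> 0" using norm_ge_zero order_trans by blast
  show ?thesis
  proof (rule that[OF K0])
    fix h :: real assume h: "0 < h" "h \<le> 1"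
    have c: "continuous_on {tp..tp+h} z"
      by (rule continuous_on_subset[OF cont_from_deriv[OF z_deriv]]) (use tp_ge in auto)
    have "\<exists>x\<in>{tp<..<tp+h}. norm (z (tp+h) - z tp) \<le> norm ((\<lambda>s. s *\<^sub>R z' x) (tp + h - tp))"
      by (rule mvt_general[OF _ c]) (use h tp_ge z_at in \<open>auto simp: has_vector_derivative_def\<close>)
    then obtain x where x: "x \<in> {tp<..<tp+h}" "norm (z (tp+h) - z tp) \<le> h * norm (z' x)"
      using h by auto
    have "norm (z' x) \<le> K" using K[of x] x h by auto
    then show "norm (z (tp+h) - z tp) \<le> K * h" using x h by (simp add: mult.commute mult_left_mono order_trans)
  qed
qed

lemma arith2: fixes R P Q DD :: real shows "R \<le> P \<Longrightarrow> Q = - R \<Longrightarrow> (DD - P) / 2 \<le> DD / 2 + Q / 2"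
  by simp

lemma Y_pre: obtains C1 B where "C1 \<ge> 0" "B \<ge> 0"
  "\<And>t. t \<ge> tp \<Longrightarrow> inner (z' t) (z' t) \<le> C1 * exp (- 2 * rho t) + B * (eps t)\<^sup>2"
proof -
  obtain B where B: "\<And>t. t \<ge> t0 \<Longrightarrow> NN t \<le> B" using z_bounded by blast
  have B0: "B \<ge> 0" using B[of t0] NN_nonneg[of t0] by simp
  obtain K where K0: "K \<ge> 0" and K: "\<And>h. 0 < h \<Longrightarrow> h \<le> 1 \<Longrightarrow> norm (z (tp+h) - z tp) \<le> K * h"
    using D_small by blast
  define C1 where "C1 = exp (2 * rho (tp+1)) * K\<^sup>2"
  have C10: "C1 \<ge> 0" by (simp add: C1_def)
  have step: "inner (z (t+h) - z t) (z (t+h) - z t) \<le> h\<^sup>2 * (C1 * exp (- 2 * rho t) + B * (eps t)\<^sup>2)"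
    if t: "t \<ge> tp" and h: "0 < h" "h \<le> 1" for t h
  proof -
    let ?D = "z (t+h) - z t" and ?D0 = "z (tp+h) - z tp"
    have "Fh h tp \<le> exp (rho tp + rho (tp+h)) * (inner ?D0 ?D0 / 2)"
    proof -
      have "(eps (tp+h) - eps tp) \<le> 0" using eps_decr[of tp "tp+h"] tp_ge h by simp
      moreover have "rhoN (tp+h) - rhoN tp \<ge> 0" using rhoN_mono[of tp "tp+h"] tp_ge h by simp
      ultimately have "(eps (tp+h) - eps tp) * (rhoN (tp+h) - rhoN tp) \<le> 0" by (simp add: mult_nonpos_nonneg)
      then show ?thesis unfolding Fh_def by (intro mult_left_mono) auto
    qed
    also have "\<dots> \<le> exp (2 * rho (tp+1)) * ((K * h)\<^sup>2 / 2)"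
    proof (rule mult_mono)
      have "rho tp \<le> rho (tp+1)" "rho (tp+h) \<le> rho (tp+1)" using rho_mono tp_ge h by auto
      then show "exp (rho tp + rho (tp+h)) \<le> exp (2 * rho (tp+1))" by simp
      have "norm ?D0 \<le> K * h" using K h by simp
      then have "(norm ?D0)\<^sup>2 \<le> (K * h)\<^sup>2" by (simp add: power_mono)
      then show "inner ?D0 ?D0 / 2 \<le> (K * h)\<^sup>2 / 2" by (simp add: power2_norm_eq_inner)
    qed auto
    finally have up: "Fh h t \<le> C1 * h\<^sup>2 / 2"
      using Fh_dec[OF h(1) t] by (simp add: C1_def power_mult_distrib)
    have e1: "eps t - eps (t+h) \<le> h * (eps t)\<^sup>2" using eps_diff[OF t] h by simp
    have e2: "eps t - eps (t+h) \<ge> 0" using eps_decr[of t "t+h"] t tp_ge h by simp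
    have j1: "rhoN (t+h) - rhoN t \<le> B * h" using rhoN_lip[of t "t+h" B] B t tp_ge h by auto
    have j2: "rhoN (t+h) - rhoN t \<ge> 0" using rhoN_mono[of t "t+h"] t tp_ge h by simp
    have "(eps t - eps (t+h)) * (rhoN (t+h) - rhoN t) \<le> (h * (eps t)\<^sup>2) * (B * h)"
      using e1 e2 j1 j2 by (intro mult_mono) auto
    then have prod: "(eps t - eps (t+h)) * (rhoN (t+h) - rhoN t) \<le> h\<^sup>2 * (B * (eps t)\<^sup>2)"
      by (simp add: power2_eq_square algebra_simps)
    define X where "X = inner (z (t+h) - z t) (z (t+h) - z t) - h\<^sup>2 * (B * (eps t)\<^sup>2)"
    have q: "(eps (t+h) - eps t) * (rhoN (t+h) - rhoN t) = - ((eps t - eps (t+h)) * (rhoN (t+h) - rhoN t))"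
      by (simp add: algebra_simps)
    have "X / 2 \<le> inner (z (t+h) - z t) (z (t+h) - z t) / 2 + (eps (t+h) - eps t) * (rhoN (t+h) - rhoN t) / 2"
      unfolding X_def by (rule arith2[OF prod q])
    then have "exp (rho t + rho (t+h)) * (X / 2) \<le> Fh h t"
      unfolding Fh_def by (intro mult_left_mono) auto
    with up have XX: "exp (rho t + rho (t+h)) * X \<le> C1 * h\<^sup>2" by simp
    have "X \<le> C1 * h\<^sup>2 * exp (- 2 * rho t)"
    proof (cases "X \<le> 0")
      case False
      have "rho t \<le> rho (t+h)" using rho_mono[of t "t+h"] t tp_ge h by simp
      then have "exp (2 * rho t) \<le> exp (rho t + rho (t+h))" by simp
      then have "exp (2 * rho t) * X \<le> C1 * h\<^sup>2" using XX False
        by (meson less_eq_real_def mult_right_mono not_le order_trans)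
      then have "X \<le> C1 * h\<^sup>2 / exp (2 * rho t)" by (simp add: field_simps)
      then show ?thesis by (simp add: exp_minus field_simps)
    next
      case True
      have "C1 * h\<^sup>2 * exp (- 2 * rho t) \<ge> 0" using C10 by simp
      then show ?thesis using True by linarith
    qed
    then show ?thesis unfolding X_def by (simp add: algebra_simps)
  qed
  show ?thesis
  proof (rule that[OF C10 B0])
    fix t assume t: "t \<ge> tp"
    define Bn where "Bn = C1 * exp (- 2 * rho t) + B * (eps t)\<^sup>2"
    have Bn0: "Bn \<ge> 0" using C10 B0 by (simp add: Bn_def)
    have gd: "((\<lambda>s. inner (z s) (z' t)) has_real_derivative inner (z' t) (z' t)) (at t within {t0..})"
      using vd_inner[OF z_deriv[of t] has_vector_derivative_const[of "z' t"]] t tp_ge by simp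
    then have lim: "((\<lambda>s. (inner (z s) (z' t) - inner (z t) (z' t)) / (s - t)) \<longlongrightarrow> inner (z' t) (z' t)) (at_right t)"
      unfolding has_field_derivative_iff
      by (rule tendsto_within_subset) (use t tp_ge in auto)
    have ev: "eventually (\<lambda>s. (inner (z s) (z' t) - inner (z t) (z' t)) / (s - t) \<le> sqrt Bn * norm (z' t)) (at_right t)"
      using eventually_at_right_real[of t "t+1", OF less_add_one]
    proof (rule eventually_mono)
      fix s assume s: "s \<in> {t<..<t+1}"
      define h where "h = s - t"
      have h: "0 < h" "h \<le> 1" "s = t + h" using s by (auto simp: h_def)
      have "(norm (z s - z t))\<^sup>2 \<le> h\<^sup>2 * Bn" using step[OF t h(1,2)] h(3)
        by (simp add: power2_norm_eq_inner Bn_def)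
      then have "norm (z s - z t) \<le> sqrt (h\<^sup>2 * Bn)" using real_le_rsqrt by blast
      also have "\<dots> = h * sqrt Bn" using h by (simp add: real_sqrt_mult)
      finally have n: "norm (z s - z t) \<le> h * sqrt Bn" .
      have "(inner (z s) (z' t) - inner (z t) (z' t)) / (s - t) = inner (z s - z t) (z' t) / h"
        by (simp add: h_def inner_diff_left)
      also have "\<dots> \<le> norm (z s - z t) * norm (z' t) / h"
        using h by (intro divide_right_mono) (auto simp: norm_cauchy_schwarz)
      also have "\<dots> \<le> h * sqrt Bn * norm (z' t) / h"
        using h n by (intro divide_right_mono mult_right_mono) auto
      also have "\<dots> = sqrt Bn * norm (z' t)" using h by simp
      finally show "(inner (z s) (z' t) - inner (z t) (z' t)) / (s - t) \<le> sqrt Bn * norm (z' t)" .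
    qed
    have "inner (z' t) (z' t) \<le> sqrt Bn * norm (z' t)"
      by (rule tendsto_upperbound[OF lim ev]) simp
    then have "norm (z' t) * norm (z' t) \<le> sqrt Bn * norm (z' t)"
      by (simp add: power2_norm_eq_inner[symmetric] power2_eq_square)
    then have "norm (z' t) \<le> sqrt Bn"
      using Bn0 by (cases "norm (z' t) = 0") (auto simp: mult_le_cancel_right)
    then have "(norm (z' t))\<^sup>2 \<le> Bn" using Bn0 real_le_rsqrt real_sqrt_le_iff
      by (metis norm_ge_zero power2_le_iff_abs_le abs_of_nonneg real_sqrt_ge_zero real_sqrt_pow2 power_mono)
    then show "inner (z' t) (z' t) \<le> C1 * exp (- 2 * rho t) + B * (eps t)\<^sup>2"
      by (simp add: power2_norm_eq_inner Bn_def)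
  qed
qed

lemma Y_bound: obtains C where "C \<ge> 0" "\<And>t. t \<ge> tp \<Longrightarrow> inner (z' t) (z' t) \<le> C * (eps t)\<^sup>2"
proof -
  obtain C1 B where C10: "C1 \<ge> 0" and B0: "B \<ge> 0"
    and Y: "\<And>t. t \<ge> tp \<Longrightarrow> inner (z' t) (z' t) \<le> C1 * exp (- 2 * rho t) + B * (eps t)\<^sup>2"
    using Y_pre by blast
  define c where "c = eps tp * exp (rho tp)"
  have c0: "c > 0" using eps_pos[OF tp_ge] by (simp add: c_def)
  have gm: "c \<le> eps t * exp (rho t)" if t: "t \<ge> tp" for t
  proof -
    have "(\<lambda>r. - (eps r * exp (rho r))) t \<le> (\<lambda>r. - (eps r * exp (rho r))) tp"
    proof (rule mono_dec[OF t, where f'="\<lambda>r. - (eps' r * exp (rho r) + eps r * (exp (rho r) * eps r))"])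
      fix x assume "x \<in> {tp..t}"
      then show "((\<lambda>r. - (eps r * exp (rho r))) has_real_derivative - (eps' x * exp (rho x) + eps x * (exp (rho x) * eps x))) (at x within {tp..t})"
        using tp_ge by (auto intro!: derivative_eq_intros rd0[OF rho_vd] rd0[OF eps_vd])
    next
      fix x assume x: "tp < x" "x < t"
      have "0 \<le> (eps x)\<^sup>2 + eps' x" using cond1[of x] x by simp
      then have "0 \<le> exp (rho x) * ((eps x)\<^sup>2 + eps' x)" by simp
      then show "- (eps' x * exp (rho x) + eps x * (exp (rho x) * eps x)) \<le> 0"
        by (simp add: algebra_simps power2_eq_square)
    qed
    then show ?thesis by (simp add: c_def)
  qed
  show ?thesis
  proof (rule that[of "C1 / c\<^sup>2 + B"])
    show "C1 / c\<^sup>2 + B \<ge> 0" using C10 B0 by simp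
    fix t assume t: "t \<ge> tp"
    have e: "eps t > 0" using eps_pos t tp_ge by simp
    have "1 / exp (rho t) \<le> eps t / c" using gm[OF t] c0 by (simp add: field_simps)
    then have "(1 / exp (rho t))\<^sup>2 \<le> (eps t / c)\<^sup>2" by (simp add: power_mono)
    then have "exp (- 2 * rho t) \<le> (eps t)\<^sup>2 / c\<^sup>2"
      by (simp add: power_divide exp_minus power2_eq_square exp_add[symmetric] field_simps)
    then have "C1 * exp (- 2 * rho t) \<le> C1 * ((eps t)\<^sup>2 / c\<^sup>2)" using C10 by (rule mult_left_mono)
    then show "inner (z' t) (z' t) \<le> (C1 / c\<^sup>2 + B) * (eps t)\<^sup>2"
      using Y[OF t] by (simp add: algebra_simps)
  qed
qed

lemma w_le:
  assumes "t \<ge> t0" "T zz + eps t *\<^sub>R zz = 0"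
  shows "norm (z' t + eps t *\<^sub>R (z t - zz)) \<le> norm (z' t)"
proof -
  let ?w = "z' t + eps t *\<^sub>R (z t - zz)" and ?u = "z t - zz"
  have w: "?w = - (T (z t) - T zz)"
  proof -
    have "z' t = - T (z t) - eps t *\<^sub>R z t" using AHT[OF assms(1)] by (simp add: algebra_simps eq_neg_iff_add_eq_0)
    moreover have "T zz = - eps t *\<^sub>R zz" using assms(2) by (simp add: eq_neg_iff_add_eq_0)
    ultimately show ?thesis by (simp add: algebra_simps)
  qed
  have "inner (- (T (z t) - T zz)) ?u = - inner (T (z t) - T zz) ?u" by (rule inner_minus_left)
  then have wu: "inner ?w ?u \<le> 0" unfolding w using mono[of "z t" zz] by linarith
  have e: "eps t > 0" using eps_pos assms by simp
  have "inner ?w ?w = inner ?w (z' t) + eps t * inner ?w ?u" by (simp add: inner_add_right)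
  also have "\<dots> \<le> inner ?w (z' t)" using wu e by (simp add: mult_nonneg_nonpos)
  also have "\<dots> \<le> norm ?w * norm (z' t)" by (rule norm_cauchy_schwarz)
  finally have "norm ?w * norm ?w \<le> norm ?w * norm (z' t)" by (simp add: power2_norm_eq_inner[symmetric] power2_eq_square)
  then show ?thesis by (cases "norm ?w = 0") (auto simp: mult_le_cancel_left)
qed

lemma core_final:
  assumes zt: "\<And>t. t \<ge> t0 \<Longrightarrow> T (zt t) + eps t *\<^sub>R zt t = 0"
  obtains C where "\<And>t. t \<ge> tp \<Longrightarrow> exp (- integral {t0..t} eps) *
            integral {tp..t} (\<lambda>\<tau>. exp (integral {t0..\<tau>} eps) * (1 / eps \<tau>) *
              (norm (z' \<tau> + eps \<tau> *\<^sub>R (z \<tau> - zt \<tau>)))\<^sup>2) \<le> C"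
proof -
  obtain C where C0: "C \<ge> 0" and C: "\<And>t. t \<ge> tp \<Longrightarrow> inner (z' t) (z' t) \<le> C * (eps t)\<^sup>2"
    using Y_bound by blast
  show ?thesis
  proof (rule that[of C])
    fix t assume t: "t \<ge> tp"
    define g where "g \<tau> = exp (rho \<tau>) * (1 / eps \<tau>) * (norm (z' \<tau> + eps \<tau> *\<^sub>R (z \<tau> - zt \<tau>)))\<^sup>2" for \<tau>
    have gle: "g \<tau> \<le> C * (exp (rho \<tau>) * eps \<tau>)" if "\<tau> \<in> {tp..t}" for \<tau>
    proof -
      have tt: "\<tau> \<ge> tp" "\<tau> \<ge> t0" using that tp_ge by auto
      have e: "eps \<tau> > 0" using eps_pos tt by simp
      have "(norm (z' \<tau> + eps \<tau> *\<^sub>R (z \<tau> - zt \<tau>)))\<^sup>2 \<le> (norm (z' \<tau>))\<^sup>2"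
        using w_le[OF tt(2) zt[OF tt(2)]] by (simp add: power_mono)
      also have "\<dots> \<le> C * (eps \<tau>)\<^sup>2" using C[OF tt(1)] by (simp add: power2_norm_eq_inner)
      finally have "exp (rho \<tau>) * (1 / eps \<tau>) * (norm (z' \<tau> + eps \<tau> *\<^sub>R (z \<tau> - zt \<tau>)))\<^sup>2
          \<le> exp (rho \<tau>) * (1 / eps \<tau>) * (C * (eps \<tau>)\<^sup>2)" using e by (intro mult_left_mono) auto
      then show ?thesis using e by (simp add: g_def power2_eq_square mult.commute mult.left_commute)
    qed
    have ftc: "((\<lambda>\<tau>. exp (rho \<tau>) * eps \<tau>) has_integral (exp (rho t) - exp (rho tp))) {tp..t}"
    proof (rule fundamental_theorem_of_calculus[OF t])
      fix x assume "x \<in> {tp..t}"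
      then have "((\<lambda>r. exp (rho r)) has_real_derivative exp (rho x) * eps x) (at x within {tp..t})"
        using tp_ge by (auto intro!: derivative_eq_intros rd0[OF rho_vd])
      then show "((\<lambda>r. exp (rho r)) has_vector_derivative exp (rho x) * eps x) (at x within {tp..t})"
        by (simp add: has_real_derivative_iff_has_vector_derivative)
    qed
    have "integral {tp..t} g \<le> C * (exp (rho t) - exp (rho tp))"
    proof (cases "g integrable_on {tp..t}")
      case True
      have "integral {tp..t} g \<le> integral {tp..t} (\<lambda>\<tau>. C * (exp (rho \<tau>) * eps \<tau>))"
      proof (rule integral_le[OF True])
        show "(\<lambda>\<tau>. C * (exp (rho \<tau>) * eps \<tau>)) integrable_on {tp..t}"
          using integrable_on_cmult_left[OF has_integral_integrable[OF ftc], of C] by simp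
      qed (use gle in auto)
      also have "\<dots> = C * (exp (rho t) - exp (rho tp))" using ftc by (simp add: integral_unique)
      finally show ?thesis .
    next
      case False
      have "exp (rho tp) \<le> exp (rho t)" using rho_mono[of tp t] tp_ge t by simp
      then show ?thesis using False C0 by (simp add: not_integrable_integral)
    qed
    also have "\<dots> \<le> C * exp (rho t)" using C0 by (simp add: mult_left_mono)
    finally have "exp (- rho t) * integral {tp..t} g \<le> exp (- rho t) * (C * exp (rho t))"
      by (intro mult_left_mono) auto
    also have "\<dots> = C" by (simp add: exp_minus field_simps)
    finally show "exp (- integral {t0..t} eps) *
            integral {tp..t} (\<lambda>\<tau>. exp (integral {t0..\<tau>} eps) * (1 / eps \<tau>) *
              (norm (z' \<tau> + eps \<tau> *\<^sub>R (z \<tau> - zt \<tau>)))\<^sup>2) \<le> C"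
      by (simp add: g_def[abs_def] rho_def[abs_def])
  qed
qed

end

theorem proposition4p6:
  fixes f :: "'a::{real_inner,complete_space} \<Rightarrow> real"
    and gf :: "'a \<Rightarrow> 'a"
    and A :: "'a \<Rightarrow> 'b::{real_inner,complete_space}"
    and Astar :: "'b \<Rightarrow> 'a"
    and b :: 'b
    and eps eps' eps'' :: "real \<Rightarrow> real"
    and t0 tp :: real
    and z z' zt :: "real \<Rightarrow> 'a \<times> 'b"
  assumes f_convex: "convex_on UNIV f"
    and f_grad: "\<And>x. (f has_derivative (\<lambda>h. inner (gf x) h)) (at x)"
    and gf_cont: "continuous_on UNIV gf"
    and gf_lip: "\<And>B. bounded B \<Longrightarrow> \<exists>L. \<forall>x\<in>B. \<forall>y\<in>B. norm (gf x - gf y) \<le> L * norm (x - y)"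
    and A_lin: "bounded_linear A"
    and A_adj: "\<And>x y. inner (A x) y = inner x (Astar y)"
    and t0_nonneg: "t0 \<ge> 0"
    and eps_pos: "\<And>t. t \<ge> t0 \<Longrightarrow> eps t > 0"
    and eps_d1: "\<And>t. t \<ge> t0 \<Longrightarrow> (eps has_real_derivative eps' t) (at t within {t0..})"
    and eps_d2: "\<And>t. t \<ge> t0 \<Longrightarrow> (eps' has_real_derivative eps'' t) (at t within {t0..})"
    and eps''_cont: "continuous_on {t0..} eps''"
    and eps_lim: "(eps \<longlongrightarrow> 0) at_top"
    and SM_nonempty: "saddle_points f A b \<noteq> {}"
    and z_deriv: "\<And>t. t \<ge> t0 \<Longrightarrow> (z has_vector_derivative z' t) (at t within {t0..})"
    and z'_cont: "continuous_on {t0..} z'"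
    and AHT: "\<And>t. t \<ge> t0 \<Longrightarrow> z' t + opT gf Astar A b (z t) + eps t *\<^sub>R z t = 0"
    and zt_zero: "\<And>t. t \<ge> t0 \<Longrightarrow> opT gf Astar A b (zt t) + eps t *\<^sub>R zt t = 0"
    and eps_decr: "\<And>s t. t0 \<le> s \<Longrightarrow> s \<le> t \<Longrightarrow> eps t \<le> eps s"
    and tp_ge: "tp \<ge> t0"
    and cond1: "\<And>t. t \<ge> tp \<Longrightarrow> (eps t)\<^sup>2 + eps' t \<ge> 0"
    and cond2: "\<And>t. t \<ge> tp \<Longrightarrow> 2 * eps t * eps' t + eps'' t \<le> 0"
  shows "Limsup at_top (\<lambda>t. ereal (exp (- integral {t0..t} eps) *
            integral {tp..t} (\<lambda>\<tau>. exp (integral {t0..\<tau>} eps) * (1 / eps \<tau>) *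
              (norm (z' \<tau> + eps \<tau> *\<^sub>R (z \<tau> - zt \<tau>)))\<^sup>2))) < \<infinity>
    \<and> Limsup at_top (\<lambda>t. ereal (exp (- integral {t0..t} eps) *
            integral {tp..t} (\<lambda>\<tau>. exp (integral {t0..\<tau>} eps) * (1 / eps \<tau>) *
              (norm (opT gf Astar A b (z \<tau>) - opT gf Astar A b (zt \<tau>)))\<^sup>2))) < \<infinity>"
proof -
  obtain q0 where q0: "opT gf Astar A b q0 = 0"
    using saddle_zero[OF f_grad A_lin A_adj SM_nonempty] by blast
  have mono: "\<And>p q. inner (opT gf Astar A b p - opT gf Astar A b q) (p - q) \<ge> 0"
    using opT_mono[OF f_convex f_grad A_lin A_adj] by blast
  obtain C where C: "\<And>t. t \<ge> tp \<Longrightarrow> exp (- integral {t0..t} eps) *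
            integral {tp..t} (\<lambda>\<tau>. exp (integral {t0..\<tau>} eps) * (1 / eps \<tau>) *
              (norm (z' \<tau> + eps \<tau> *\<^sub>R (z \<tau> - zt \<tau>)))\<^sup>2) \<le> C"
    using core_final[of "opT gf Astar A b" q0 t0 eps eps' eps'' z z' tp zt]
      mono q0 eps_pos eps_d1 eps_d2 z_deriv z'_cont AHT eps_decr tp_ge cond1 cond2 zt_zero
    by blast
  have eq: "integral {tp..t} (\<lambda>\<tau>. exp (integral {t0..\<tau>} eps) * (1 / eps \<tau>) *
              (norm (opT gf Astar A b (z \<tau>) - opT gf Astar A b (zt \<tau>)))\<^sup>2)
      = integral {tp..t} (\<lambda>\<tau>. exp (integral {t0..\<tau>} eps) * (1 / eps \<tau>) *
              (norm (z' \<tau> + eps \<tau> *\<^sub>R (z \<tau> - zt \<tau>)))\<^sup>2)" for t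
  proof (rule integral_cong)
    fix \<tau> assume "\<tau> \<in> {tp..t}"
    then have t0: "\<tau> \<ge> t0" using tp_ge by simp
    have "opT gf Astar A b (z \<tau>) - opT gf Astar A b (zt \<tau>) = - (z' \<tau> + eps \<tau> *\<^sub>R (z \<tau> - zt \<tau>))"
    proof -
      have "opT gf Astar A b (z \<tau>) = - z' \<tau> - eps \<tau> *\<^sub>R z \<tau>" using AHT[OF t0] by (simp add: algebra_simps eq_neg_iff_add_eq_0)
      moreover have "opT gf Astar A b (zt \<tau>) = - eps \<tau> *\<^sub>R zt \<tau>" using zt_zero[OF t0] by (simp add: eq_neg_iff_add_eq_0)
      ultimately show ?thesis by (simp add: algebra_simps)
    qed
    then show "exp (integral {t0..\<tau>} eps) * (1 / eps \<tau>) *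
              (norm (opT gf Astar A b (z \<tau>) - opT gf Astar A b (zt \<tau>)))\<^sup>2 =
          exp (integral {t0..\<tau>} eps) * (1 / eps \<tau>) *
              (norm (z' \<tau> + eps \<tau> *\<^sub>R (z \<tau> - zt \<tau>)))\<^sup>2" by (simp only: norm_minus_cancel)
  qed
  have ev: "eventually (\<lambda>t. t \<ge> tp) at_top" by (rule eventually_ge_at_top)
  have L1: "Limsup at_top (\<lambda>t. ereal (exp (- integral {t0..t} eps) *
            integral {tp..t} (\<lambda>\<tau>. exp (integral {t0..\<tau>} eps) * (1 / eps \<tau>) *
              (norm (z' \<tau> + eps \<tau> *\<^sub>R (z \<tau> - zt \<tau>)))\<^sup>2))) \<le> ereal C"
    by (rule Limsup_bounded) (use eventually_mono[OF ev C] in simp)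
  have L2: "Limsup at_top (\<lambda>t. ereal (exp (- integral {t0..t} eps) *
            integral {tp..t} (\<lambda>\<tau>. exp (integral {t0..\<tau>} eps) * (1 / eps \<tau>) *
              (norm (opT gf Astar A b (z \<tau>) - opT gf Astar A b (zt \<tau>)))\<^sup>2))) \<le> ereal C"
    unfolding eq by (rule Limsup_bounded) (use eventually_mono[OF ev C] in simp)
  show ?thesis using L1 L2 by (auto dest: order.strict_trans1[of _ "ereal C" \<infinity>])
qed

end
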